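(* Let $(N,{\mathcal{S}},K)$ be an instance of MaxCover with $|{\mathcal{S}}|=m\ge K$ sets, where every element of $N$ belongs to at least $p\ge1$ sets of ${\mathcal{S}}$. Then the greedy algorithm returns $K$ sets covering at least $\left(1-e^{-\max(pK/m,\,1)}\right)\cdot\mathrm{OPT}$ elements, where $\mathrm{OPT}$ is the maximum number of elements coverable by $K$ sets of ${\mathcal{S}}$.
   Context: The greedy algorithm: start with $C=\emptyset$; for $i=1,\dots,K$, add to $C$ a set $S\in{\mathcal{S}}\setminus C$ maximizing $|S\setminus\bigcup_{T\in C}T|$ (ties broken arbitrarily); return $C$. *)

theory Defs
  imports "HOL-Analysis.Analysis"
begin

definition maxcover_instance :: "'a set \<Rightarrow> 'a set set \<Rightarrow> bool" where
  "maxcover_instance N S \<longleftrightarrow> finite N \<and> finite S \<and> (\<forall>T\<in>S. T \<subseteq> N)"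

definition gain :: "'a set set \<Rightarrow> 'a set \<Rightarrow> nat" where
  "gain C T = card (T - \<Union>C)"

definition greedy_step :: "'a set set \<Rightarrow> 'a set set \<Rightarrow> 'a set \<Rightarrow> bool" where
  "greedy_step S C T \<longleftrightarrow> T \<in> S - C \<and> (\<forall>T'\<in>S - C. gain C T' \<le> gain C T)"

definition greedy_run :: "'a set set \<Rightarrow> nat \<Rightarrow> 'a set list \<Rightarrow> bool" where
  "greedy_run S K cs \<longleftrightarrow> length cs = K \<and>
     (\<forall>i<K. greedy_step S (set (take i cs)) (cs ! i))"

definition OPT :: "'a set set \<Rightarrow> nat \<Rightarrow> nat" where
  "OPT S K = Max {card (\<Union>C) | C. C \<subseteq> S \<and> card C = K}"

end

theory Submission
  imports Defs
begin

lemma decay_aux: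
  fixes u :: "nat \<Rightarrow> real"
  assumes "0 \<le> a" "a \<le> 1"
  shows "(\<forall>i<K. u (Suc i) \<le> (1-a) * u i) \<Longrightarrow> u K \<le> (1-a)^K * u 0"
proof (induction K)
  case 0 then show ?case by simp
next
  case (Suc K)
  then have "u K \<le> (1-a)^K * u 0" by auto
  then have "(1-a) * u K \<le> (1-a) * ((1-a)^K * u 0)"
    using assms by (intro mult_left_mono) auto
  moreover have "u (Suc K) \<le> (1-a) * u K" using Suc.prems by auto
  ultimately show ?case by (simp add: algebra_simps)
qed

lemma decay:
  fixes u :: "nat \<Rightarrow> real"
  assumes "0 \<le> a" "a \<le> 1" "\<forall>i<K. u (Suc i) \<le> (1-a) * u i" "u 0 \<ge> 0"
  shows "u K \<le> exp (- (a * K)) * u 0"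
proof -
  have "u K \<le> (1-a)^K * u 0" using decay_aux assms by blast
  also have "(1-a)^K \<le> exp (-a) ^ K"
  proof (rule power_mono)
    show "1 - a \<le> exp (-a)" using exp_ge_add_one_self[of "-a"] by simp
  qed (use assms in simp)
  also have "exp (-a) ^ K = exp (- (a*K))"
    by (metis exp_of_nat_mult mult.commute mult_minus_right)
  finally show ?thesis using assms(4) by (simp add: mult_right_mono)
qed

theorem mainTheorem8:
  fixes N :: "'a set" and S :: "'a set set" and K m p :: nat and cs :: "'a set list"
  assumes "maxcover_instance N S"
    and "card S = m" and "m \<ge> K"
    and "p \<ge> 1"
    and "\<forall>x\<in>N. card {T\<in>S. x \<in> T} \<ge> p"
    and "greedy_run S K cs"
  shows "distinct cs \<and> set cs \<subseteq> S \<and> card (set cs) = K \<and>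
         real (card (\<Union>(set cs))) \<ge>
           (1 - exp (- max (real p * real K / real m) 1)) * real (OPT S K)"
proof -
  have finN: "finite N" and finS: "finite S" and sub: "\<And>T. T \<in> S \<Longrightarrow> T \<subseteq> N"
    using assms(1) unfolding maxcover_instance_def by auto
  have len: "length cs = K" and gs: "\<And>i. i < K \<Longrightarrow> greedy_step S (set (take i cs)) (cs ! i)"
    using assms(6) unfolding greedy_run_def by auto
  define C where "C i = set (take i cs)" for i
  define cov where "cov i = card (\<Union>(C i))" for i
  have csS: "set cs \<subseteq> S"
  proof
    fix T assume "T \<in> set cs"
    then obtain i where "i < K" "T = cs ! i" using len by (auto simp: in_set_conv_nth)
    then show "T \<in> S" using gs[of i] unfolding greedy_step_def by auto
  qed
  have dist: "distinct cs"
    unfolding distinct_conv_nth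
  proof (intro allI impI)
    fix i j assume ij: "i < length cs" "j < length cs" "i \<noteq> j"
    { fix i j assume "i < j" "j < K"
      then have "cs ! i \<in> set (take j cs)" using len by (auto simp: in_set_conv_nth)
      then have "cs ! i \<noteq> cs ! j" using gs[of j] \<open>j < K\<close> unfolding greedy_step_def by auto }
    then show "cs ! i \<noteq> cs ! j" using ij len by (metis linorder_neqE_nat)
  qed
  have cardK: "card (set cs) = K" using dist len by (simp add: distinct_card)
  have CS: "C i \<subseteq> S" for i using csS unfolding C_def by (meson order_trans set_take_subset)
  have UCN: "\<Union>(C i) \<subseteq> N" for i using CS sub by blast
  have finU: "finite (\<Union>(C i))" for i using finite_subset[OF UCN finN] .
  have finT: "T \<in> S \<Longrightarrow> finite T" for T using finite_subset[OF sub finN] by blast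
  have Csuc: "C (Suc i) = insert (cs ! i) (C i)" if "i < K" for i
    using that len unfolding C_def by (simp add: take_Suc_conv_app_nth)
  have covsuc: "cov (Suc i) = cov i + gain (C i) (cs ! i)" if "i < K" for i
  proof -
    have "cs ! i \<in> S" using csS that len by auto
    then have ft: "finite (cs ! i)" by (rule finT)
    have e: "\<Union>(C (Suc i)) = (cs ! i - \<Union>(C i)) \<union> \<Union>(C i)" using Csuc[OF that] by auto
    have "card ((cs ! i - \<Union>(C i)) \<union> \<Union>(C i)) = card (cs ! i - \<Union>(C i)) + card (\<Union>(C i))"
      using ft finU by (intro card_Un_disjoint) auto
    then have "cov (Suc i) = card (cs ! i - \<Union>(C i)) + card (\<Union>(C i))"
      unfolding cov_def e .
    then show ?thesis unfolding gain_def cov_def by simp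
  qed
  have gstep: "greedy_step S (C i) (cs ! i)" if "i < K" for i using gs[OF that] unfolding C_def .
  have cov0: "cov 0 = 0" unfolding cov_def C_def by simp
  have covK: "cov K = card (\<Union>(set cs))" unfolding cov_def C_def using len by simp
  define Q where "Q = {card (\<Union>C) | C. C \<subseteq> S \<and> card C = K}"
  have finQ: "finite Q"
  proof -
    have "Q \<subseteq> (\<lambda>C. card (\<Union>C)) ` Pow S" unfolding Q_def by auto
    then show ?thesis using finS by (meson finite_Pow_iff finite_imageI finite_subset)
  qed
  obtain C0 where "C0 \<subseteq> S" "card C0 = K" using assms(2,3) obtain_subset_with_card_n by metis
  then have neQ: "Q \<noteq> {}" unfolding Q_def by auto
  have OPTQ: "OPT S K = Max Q" unfolding OPT_def Q_def ..
  have OPTle: "OPT S K \<le> card N"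
    unfolding OPTQ using finQ neQ
  proof (subst Max_le_iff)
    show "\<forall>a\<in>Q. a \<le> card N" unfolding Q_def
    proof (intro ballI)
      fix a assume "a \<in> {card (\<Union>C) |C. C \<subseteq> S \<and> card C = K}"
      then obtain C where a: "a = card (\<Union>C)" "C \<subseteq> S" by blast
      then have "\<Union>C \<subseteq> N" using sub by blast
      then show "a \<le> card N" using card_mono[OF finN] a by simp
    qed
  qed auto
  obtain Cs where Cs: "Cs \<subseteq> S" "card Cs = K" "card (\<Union>Cs) = OPT S K"
    using Max_in[OF finQ neQ] unfolding OPTQ Q_def by auto
  show ?thesis
  proof (cases "N = {} \<or> K = 0")
    case True
    then have "OPT S K = 0"
    proof
      assume "N = {}"
      then show ?thesis using OPTle by simp
    next
      assume "K = 0"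
      then have "Cs = {}" using Cs finS finite_subset by (metis card_0_eq)
      then show ?thesis using Cs by simp
    qed
    then show ?thesis using dist csS cardK by simp
  next
    case False
    then have Kpos: "K \<ge> 1" and Nne: "N \<noteq> {}" by auto
    then have mpos: "m \<ge> 1" using assms(3) by auto
    have main1: "real (cov K) \<ge> (1 - exp (-1)) * real (OPT S K)"
    proof -
      define u where "u i = real (OPT S K) - real (cov i)" for i
      have "\<forall>i<K. u (Suc i) \<le> (1 - 1/real K) * u i"
      proof (intro allI impI)
        fix i assume i: "i < K"
        define g where "g = gain (C i) (cs ! i)"
        have gmax: "\<And>T. T \<in> S - C i \<Longrightarrow> gain (C i) T \<le> g"
          using gstep[OF i] unfolding greedy_step_def g_def by auto
        have "\<Union>Cs - \<Union>(C i) = (\<Union>T\<in>Cs. T - \<Union>(C i))" by auto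
        moreover have "finite Cs" using finite_subset[OF Cs(1) finS] .
        ultimately have "card (\<Union>Cs - \<Union>(C i)) \<le> (\<Sum>T\<in>Cs. gain (C i) T)"
          unfolding gain_def using card_UN_le[of Cs "\<lambda>T. T - \<Union>(C i)"] by simp
        also have "\<dots> \<le> (\<Sum>T\<in>Cs. g)"
        proof (rule sum_mono)
          fix T assume "T \<in> Cs"
          show "gain (C i) T \<le> g"
          proof (cases "T \<in> C i")
            case True
            then have "T - \<Union>(C i) = {}" by blast
            then have "gain (C i) T = 0" unfolding gain_def by (simp only: card.empty)
            then show ?thesis by simp
          next
            case False then show ?thesis using gmax \<open>T \<in> Cs\<close> Cs by auto
          qed
        qed
        also have "\<dots> = K * g" using Cs by simp
        finally have A: "card (\<Union>Cs - \<Union>(C i)) \<le> K * g" .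
        have "\<Union>Cs \<subseteq> N" using Cs(1) sub by blast
        then have "finite (\<Union>Cs)" using finN by (rule finite_subset)
        have "\<Union>Cs \<subseteq> (\<Union>Cs - \<Union>(C i)) \<union> \<Union>(C i)" by blast
        then have "card (\<Union>Cs) \<le> card ((\<Union>Cs - \<Union>(C i)) \<union> \<Union>(C i))"
          using \<open>finite (\<Union>Cs)\<close> finU by (intro card_mono) auto
        also have "\<dots> \<le> card (\<Union>Cs - \<Union>(C i)) + card (\<Union>(C i))" by (rule card_Un_le)
        finally have "card (\<Union>Cs) \<le> card (\<Union>Cs - \<Union>(C i)) + card (\<Union>(C i))" .
        then have "real (OPT S K) - real (cov i) \<le> real K * real g"
          using A Cs unfolding cov_def by (simp add: of_nat_mult[symmetric] del: of_nat_mult)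
        then have "u i \<le> real K * real g" unfolding u_def .
        then have "real g \<ge> u i / real K" using Kpos by (simp add: divide_simps mult.commute)
        moreover have "u (Suc i) = u i - real g" unfolding u_def g_def using covsuc[OF i] by simp
        ultimately show "u (Suc i) \<le> (1 - 1/real K) * u i" by (simp add: algebra_simps)
      qed
      then have "u K \<le> exp (- (1/real K * K)) * u 0"
        using Kpos by (intro decay) (auto simp: u_def cov0)
      then show ?thesis using Kpos unfolding u_def cov0 by (simp add: algebra_simps)
    qed
    have main2: "real (cov K) \<ge> (1 - exp (- (real p * real K / real m))) * real (OPT S K)"
    proof -
      obtain x where "x \<in> N" using Nne by auto
      then have "p \<le> card {T\<in>S. x \<in> T}" using assms(5) by auto
      also have "\<dots> \<le> m" using assms(2) card_mono[OF finS, of "{T\<in>S. x \<in> T}"] by auto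
      finally have pm: "p \<le> m" .
      define u where "u i = real (card N) - real (cov i)" for i
      have "\<forall>i<K. u (Suc i) \<le> (1 - real p/real m) * u i"
      proof (intro allI impI)
        fix i assume i: "i < K"
        define g where "g = gain (C i) (cs ! i)"
        define U where "U = N - \<Union>(C i)"
        have finUU: "finite U" using finN U_def by simp
        have gmax: "\<And>T. T \<in> S - C i \<Longrightarrow> gain (C i) T \<le> g"
          using gstep[OF i] unfolding greedy_step_def g_def by auto
        have gainU: "gain (C i) T = card (T \<inter> U)" if "T \<in> S" for T
        proof -
          have "T - \<Union>(C i) = T \<inter> (N - \<Union>(C i))" using sub[OF that] by blast
          then show ?thesis unfolding gain_def U_def by simp
        qed
        have "p * card U = (\<Sum>x\<in>U. p)" by simp
        also have "\<dots> \<le> (\<Sum>x\<in>U. card {T\<in>S. x \<in> T})"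
          using assms(5) U_def by (intro sum_mono) auto
        also have "\<dots> = (\<Sum>x\<in>U. \<Sum>T\<in>S. if x \<in> T then 1 else 0)"
        proof (rule sum.cong[OF refl])
          fix x show "card {T\<in>S. x \<in> T} = (\<Sum>T\<in>S. if x \<in> T then 1 else 0)"
            using sum.inter_filter[OF finS, of "\<lambda>_. 1::nat" "\<lambda>T. x\<in>T"] by simp
        qed
        also have "\<dots> = (\<Sum>T\<in>S. \<Sum>x\<in>U. if x \<in> T then 1 else 0)" by (rule sum.swap)
        also have "\<dots> = (\<Sum>T\<in>S. card (T \<inter> U))"
        proof (rule sum.cong[OF refl])
          fix T
          have "{x\<in>U. x \<in> T} = T \<inter> U" by blast
          then show "(\<Sum>x\<in>U. if x \<in> T then 1 else 0) = card (T \<inter> U)"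
            using sum.inter_filter[OF finUU, of "\<lambda>_. 1::nat" "\<lambda>x. x\<in>T"] by simp
        qed
        also have "\<dots> = (\<Sum>T\<in>S. gain (C i) T)" using gainU by simp
        also have "\<dots> = (\<Sum>T\<in>S - C i. gain (C i) T)"
        proof (rule sum.mono_neutral_right)
          show "\<forall>T\<in>S - (S - C i). gain (C i) T = 0"
          proof
            fix T assume "T \<in> S - (S - C i)"
            then have "T - \<Union>(C i) = {}" by blast
            then show "gain (C i) T = 0" unfolding gain_def by (simp only: card.empty)
          qed
        qed (use finS in auto)
        also have "\<dots> \<le> card (S - C i) * g" using sum_bounded_above[of "S - C i" "gain (C i)" g] gmax by auto
        also have "\<dots> \<le> m * g" using assms(2) card_mono[OF finS Diff_subset, of "C i"] by (intro mult_right_mono) auto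
        finally have A: "real p * real (card U) \<le> real m * real g"
          by (simp add: of_nat_mult[symmetric] del: of_nat_mult)
        have "card U = card N - cov i" unfolding U_def cov_def
          using card_Diff_subset[OF finU UCN] .
        moreover have "cov i \<le> card N" unfolding cov_def using card_mono[OF finN UCN] .
        ultimately have "real (card U) = u i" unfolding u_def by simp
        then have "real g \<ge> real p / real m * u i" using A mpos by (simp add: divide_simps mult.commute)
        moreover have "u (Suc i) = u i - real g" unfolding u_def g_def using covsuc[OF i] by simp
        ultimately show "u (Suc i) \<le> (1 - real p/real m) * u i" by (simp add: algebra_simps)
      qed
      then have "u K \<le> exp (- (real p/real m * K)) * u 0"
        using pm mpos by (intro decay) (auto simp: u_def cov0)
      then have B: "real (cov K) \<ge> (1 - exp (- (real p * real K / real m))) * real (card N)"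
        unfolding u_def cov0 by (simp add: algebra_simps)
      have "0 \<le> 1 - exp (- (real p * real K / real m))" by simp
      then have "(1 - exp (- (real p * real K / real m))) * real (OPT S K)
               \<le> (1 - exp (- (real p * real K / real m))) * real (card N)"
        using OPTle by (intro mult_left_mono) auto
      then show ?thesis using B by linarith
    qed
    have "real (cov K) \<ge> (1 - exp (- max (real p * real K / real m) 1)) * real (OPT S K)"
      using main1 main2 by (cases "real p * real K / real m \<le> 1") (auto simp: max_def)
    then have "real (card (\<Union>(set cs))) \<ge> (1 - exp (- max (real p * real K / real m) 1)) * real (OPT S K)"
      unfolding covK .
    then show ?thesis using dist csS cardK by (intro conjI)
  qed
qed

end
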